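(* For every integer $m\ge1$ and every smooth closed immersed planar curve $\gamma$, $$E_m[\gamma]\le\frac1{2m+1}L[\gamma]^{3/2}\|\mathcal K_m\|_{L^2(\gamma)},$$ equivalently $L[\gamma]^{2m+1}E_m[\gamma]\le\frac1{2m+1}L[\gamma]^{2m+5/2}\|\mathcal K_m\|_{L^2(\gamma)}$.
   Context: $s$ arclength, $k$ signed curvature, $k_{s^j}$ its $j$-th arclength derivative, $L[\gamma]$ length, $E_m[\gamma]=\frac12\int_\gamma k_{s^m}^2ds$, $\mathcal K_m=(-1)^{m+1}k_{s^{2m+2}}-\tfrac12 k\,k_{s^m}^2+k\sum_{r=1}^m(-1)^{r+1}k_{s^{m-r}}k_{s^{m+r}}$, and $\|\cdot\|_{L^2(\gamma)}$ is taken with respect to $ds$. *)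

theory Defs
  imports "HOL-Analysis.Analysis"
begin

text \<open>A planar curve is given by its coordinate functions x, y :: real => real,
 parametrised over the circle R/Z, i.e. 1-periodic.\<close>

definition smooth_fun :: "(real \<Rightarrow> real) \<Rightarrow> bool" where
  "smooth_fun f \<longleftrightarrow> (\<forall>n t. (deriv ^^ n) f differentiable (at t))"

definition smooth_closed_immersed :: "(real \<Rightarrow> real) \<Rightarrow> (real \<Rightarrow> real) \<Rightarrow> bool" where
  "smooth_closed_immersed x y \<longleftrightarrow>
     smooth_fun x \<and> smooth_fun y \<and>
     (\<forall>t. x (t + 1) = x t \<and> y (t + 1) = y t) \<and>
     (\<forall>t. (deriv x t, deriv y t) \<noteq> (0, 0))"

definition speed :: "(real \<Rightarrow> real) \<Rightarrow> (real \<Rightarrow> real) \<Rightarrow> real \<Rightarrow> real" where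
  "speed x y t = sqrt ((deriv x t)\<^sup>2 + (deriv y t)\<^sup>2)"

definition curv :: "(real \<Rightarrow> real) \<Rightarrow> (real \<Rightarrow> real) \<Rightarrow> real \<Rightarrow> real" where
  "curv x y t = (deriv x t * deriv (deriv y) t - deriv y t * deriv (deriv x) t) / (speed x y t) ^ 3"

fun curv_s :: "(real \<Rightarrow> real) \<Rightarrow> (real \<Rightarrow> real) \<Rightarrow> nat \<Rightarrow> real \<Rightarrow> real" where
  "curv_s x y 0 = curv x y"
| "curv_s x y (Suc j) = (\<lambda>t. deriv (curv_s x y j) t / speed x y t)"

definition int_ds :: "(real \<Rightarrow> real) \<Rightarrow> (real \<Rightarrow> real) \<Rightarrow> (real \<Rightarrow> real) \<Rightarrow> real" where
  "int_ds x y f = integral {0..1} (\<lambda>t. f t * speed x y t)"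

definition curve_length :: "(real \<Rightarrow> real) \<Rightarrow> (real \<Rightarrow> real) \<Rightarrow> real" where
  "curve_length x y = int_ds x y (\<lambda>_. 1)"

definition energy :: "nat \<Rightarrow> (real \<Rightarrow> real) \<Rightarrow> (real \<Rightarrow> real) \<Rightarrow> real" where
  "energy m x y = 1/2 * int_ds x y (\<lambda>t. (curv_s x y m t)\<^sup>2)"

definition Kop :: "nat \<Rightarrow> (real \<Rightarrow> real) \<Rightarrow> (real \<Rightarrow> real) \<Rightarrow> real \<Rightarrow> real" where
  "Kop m x y t =
     (-1) ^ (m + 1) * curv_s x y (2 * m + 2) t
     - 1/2 * curv x y t * (curv_s x y m t)\<^sup>2
     + curv x y t * (\<Sum>r = 1..m. (-1) ^ (r + 1) * curv_s x y (m - r) t * curv_s x y (m + r) t)"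

definition L2_ds :: "(real \<Rightarrow> real) \<Rightarrow> (real \<Rightarrow> real) \<Rightarrow> (real \<Rightarrow> real) \<Rightarrow> real" where
  "L2_ds x y f = sqrt (int_ds x y (\<lambda>t. (f t)\<^sup>2))"

end

theory Submission
  imports Defs
begin

inductive_set Gs :: "(real\<Rightarrow>real) \<Rightarrow> (real\<Rightarrow>real) \<Rightarrow> (real\<Rightarrow>real) set" for x y where
  gx: "(deriv^^n) x \<in> Gs x y"
| gy: "(deriv^^n) y \<in> Gs x y"
| gc: "(\<lambda>t. c) \<in> Gs x y"
| gr: "(\<lambda>t. 1 / speed x y t) \<in> Gs x y"
| gadd: "f \<in> Gs x y \<Longrightarrow> g \<in> Gs x y \<Longrightarrow> (\<lambda>t. f t + g t) \<in> Gs x y"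
| gmul: "f \<in> Gs x y \<Longrightarrow> g \<in> Gs x y \<Longrightarrow> (\<lambda>t. f t * g t) \<in> Gs x y"

lemma deriv_periodic:
  fixes f :: "real \<Rightarrow> real"
  assumes "\<And>t. f (t+1) = f t"
  shows "deriv f (t+1) = deriv f t"
proof -
  have e: "(\<lambda>s. f (s+1)) = f" using assms by auto
  have "deriv f (t+1) = (SOME D. (f has_field_derivative D) (at (t+1)))" by (simp add: deriv_def)
  also have "\<dots> = (SOME D. ((\<lambda>s. f (s+1)) has_field_derivative D) (at t))"
    by (simp add: DERIV_shift)
  also have "\<dots> = deriv f t" by (simp add: e deriv_def)
  finally show ?thesis .
qed

lemma funpow_periodic:
  fixes f :: "real \<Rightarrow> real"
  assumes "\<And>t. f (t+1) = f t"
  shows "(deriv^^n) f (t+1) = (deriv^^n) f t"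
  using assms
proof (induction n arbitrary: t)
  case 0 then show ?case by simp
next
  case (Suc n) then show ?case by (simp add: deriv_periodic)
qed

locale curve =
  fixes x y :: "real \<Rightarrow> real"
  assumes sci: "smooth_closed_immersed x y"
begin

abbreviation "G \<equiv> Gs x y"
abbreviation "\<sigma> \<equiv> speed x y"

lemma smx: "(deriv^^n) x differentiable (at t)" and smy: "(deriv^^n) y differentiable (at t)"
  using sci unfolding smooth_closed_immersed_def smooth_fun_def by auto

lemma perx: "x (t+1) = x t" and pery: "y (t+1) = y t"
  using sci unfolding smooth_closed_immersed_def by auto

lemma u_pos: "(deriv x t)\<^sup>2 + (deriv y t)\<^sup>2 > 0"
proof -
  have "(deriv x t, deriv y t) \<noteq> (0,0)" using sci unfolding smooth_closed_immersed_def by auto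
  then show ?thesis by (simp add: sum_power2_gt_zero_iff)
qed

lemma sig_pos: "\<sigma> t > 0" unfolding speed_def using u_pos by simp

lemma dx1: "(deriv x has_real_derivative (deriv^^2) x t) (at t)"
  using smx[of 1 t] by (simp add: DERIV_deriv_iff_real_differentiable[symmetric] numeral_2_eq_2)
lemma dy1: "(deriv y has_real_derivative (deriv^^2) y t) (at t)"
  using smy[of 1 t] by (simp add: DERIV_deriv_iff_real_differentiable[symmetric] numeral_2_eq_2)

lemma alg1: "(s::real) > 0 \<Longrightarrow> - (inverse s / 2 * (2 * a + 2 * b)) * inverse (s\<^sup>2) = - (a + b) * (1/s) * (1/s) * (1/s)"
  by (simp add: field_simps power2_eq_square)

lemma r_deriv: "((\<lambda>t. 1 / \<sigma> t) has_real_derivative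
   - (deriv x t * (deriv^^2) x t + deriv y t * (deriv^^2) y t) * (1/\<sigma> t) * (1/\<sigma> t) * (1/\<sigma> t)) (at t)"
proof -
  have u: "((\<lambda>t. (deriv x t)\<^sup>2 + (deriv y t)\<^sup>2) has_real_derivative
      2 * (deriv x t * (deriv^^2) x t) + 2 * (deriv y t * (deriv^^2) y t)) (at t)"
    using DERIV_add[OF DERIV_power[OF dx1, of 2] DERIV_power[OF dy1, of 2]] by (simp add: mult.commute)
  have s: "((\<lambda>t. \<sigma> t) has_real_derivative
      inverse (\<sigma> t) / 2 * (2 * (deriv x t * (deriv^^2) x t) + 2 * (deriv y t * (deriv^^2) y t))) (at t)"
    using DERIV_chain2[OF DERIV_real_sqrt[OF u_pos] u] unfolding speed_def .
  have "((\<lambda>t. inverse (\<sigma> t)) has_real_derivative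
      - (inverse (\<sigma> t) / 2 * (2 * (deriv x t * (deriv^^2) x t) + 2 * (deriv y t * (deriv^^2) y t))) * inverse ((\<sigma> t)^2)) (at t)"
    using DERIV_inverse_fun[OF s] sig_pos[of t] by (simp add: power2_eq_square)
  then have "((\<lambda>t. inverse (\<sigma> t)) has_real_derivative
   - (deriv x t * (deriv^^2) x t + deriv y t * (deriv^^2) y t) * (1/\<sigma> t) * (1/\<sigma> t) * (1/\<sigma> t)) (at t)"
    by (simp only: alg1[OF sig_pos[of t]])
  moreover have "(\<lambda>t. 1 / \<sigma> t) = (\<lambda>t. inverse (\<sigma> t))" by (simp add: inverse_eq_divide)
  ultimately show ?thesis by (simp only:)
qed

lemma G_cmul: "f \<in> G \<Longrightarrow> (\<lambda>t. c * f t) \<in> G"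
  by (rule Gs.gmul[OF Gs.gc])
lemma G_neg: "f \<in> G \<Longrightarrow> (\<lambda>t. - f t) \<in> G"
  using G_cmul[of f "-1"] by simp
lemma G_sub: "f \<in> G \<Longrightarrow> g \<in> G \<Longrightarrow> (\<lambda>t. f t - g t) \<in> G"
  using Gs.gadd[OF _ G_neg, of f g] by simp
lemma Gx1: "deriv x \<in> G" using Gs.gx[of 1] by simp
lemma Gy1: "deriv y \<in> G" using Gs.gy[of 1] by simp
lemma Gx0: "x \<in> G" using Gs.gx[of 0] by simp
lemma Gy0: "y \<in> G" using Gs.gy[of 0] by simp

lemma G_props:
  assumes "f \<in> G"
  shows "(\<forall>t. (f has_real_derivative deriv f t) (at t)) \<and> deriv f \<in> G \<and> (\<forall>t. f (t+1) = f t)"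
  using assms
proof (induction rule: Gs.induct)
  case (gx n)
  have "(deriv ^^ Suc n) x \<in> G" by (rule Gs.gx)
  then show ?case using smx[of n] funpow_periodic[of x, OF perx]
    by (simp add: DERIV_deriv_iff_real_differentiable)
next
  case (gy n)
  have "(deriv ^^ Suc n) y \<in> G" by (rule Gs.gy)
  then show ?case using smy[of n] funpow_periodic[of y, OF pery]
    by (simp add: DERIV_deriv_iff_real_differentiable)
next
  case (gc c)
  have "deriv (\<lambda>t. c) = (\<lambda>t. 0)" by (rule ext) simp
  then show ?case by (auto intro: Gs.gc)
next
  case gr
  have e: "deriv (\<lambda>t. 1 / \<sigma> t) = (\<lambda>t. - (deriv x t * (deriv^^2) x t + deriv y t * (deriv^^2) y t) * (1/\<sigma> t) * (1/\<sigma> t) * (1/\<sigma> t))"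
    by (rule ext, rule DERIV_imp_deriv, rule r_deriv)
  have "deriv (\<lambda>t. 1 / \<sigma> t) \<in> G" unfolding e
    by (intro Gs.gmul Gs.gadd G_neg Gs.gr Gx1 Gy1 Gs.gx Gs.gy)
  moreover have "\<sigma> (t+1) = \<sigma> t" for t
    unfolding speed_def using deriv_periodic[of x, OF perx] deriv_periodic[of y, OF pery] by simp
  ultimately show ?case using r_deriv e by simp
next
  case (gadd f g)
  have d: "((\<lambda>t. f t + g t) has_real_derivative deriv f t + deriv g t) (at t)" for t
    using gadd.IH by (intro DERIV_add) auto
  have e: "deriv (\<lambda>t. f t + g t) = (\<lambda>t. deriv f t + deriv g t)"
    using d by (intro ext DERIV_imp_deriv)
  have "deriv (\<lambda>t. f t + g t) \<in> G" unfolding e using gadd.IH by (intro Gs.gadd) auto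
  then show ?case using gadd.IH d unfolding e by auto
next
  case (gmul f g)
  have d: "((\<lambda>t. f t * g t) has_real_derivative deriv f t * g t + f t * deriv g t) (at t)" for t
    using gmul.IH DERIV_mult[of f "deriv f t" t UNIV g "deriv g t"] by (simp add: algebra_simps)
  have e: "deriv (\<lambda>t. f t * g t) = (\<lambda>t. deriv f t * g t + f t * deriv g t)"
    using d by (intro ext DERIV_imp_deriv)
  have "deriv (\<lambda>t. f t * g t) \<in> G" unfolding e using gmul.IH gmul.hyps
    by (intro Gs.gadd Gs.gmul) auto
  then show ?case using gmul.IH d unfolding e by auto
qed

end


lemma alg_p: fixes a b c d s X Y :: real
  assumes s: "s > 0" and ss: "s * s = a * a + b * b"
  shows "((b * a + Y * c - (a * b + X * d)) * (1/s) + (Y * a - X * b) * (-(a * c+b * d) * (1/s) * (1/s) * (1/s))) / s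
       = - ((a * d - b * c) * (1/s) * (1/s) * (1/s)) * ((X * a + Y * b) * (1/s))"
proof -
  have "((b * a + Y * c - (a * b + X * d)) * (1/s) + (Y * a - X * b) * (-(a * c+b * d) * (1/s) * (1/s) * (1/s))) / s
      = ((Y * c - X * d) * (s * s) - (Y * a - X * b) * (a * c+b * d)) / (s * s * s * s)"
    using s by (simp add: field_simps)
  also have "\<dots> = ((Y * c - X * d) * (a * a + b * b) - (Y * a - X * b) * (a * c+b * d)) / (s * s * s * s)"
    by (simp only: ss)
  also have "\<dots> = (- (a * d - b * c) * (X * a + Y * b)) / (s * s * s * s)"
    by (simp add: algebra_simps)
  also have "\<dots> = - ((a * d - b * c) * (1/s) * (1/s) * (1/s)) * ((X * a + Y * b) * (1/s))"
    using s by (simp add: field_simps)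
  finally show ?thesis .
qed
lemma alg_q: fixes a b c d s X Y :: real
  assumes s: "s > 0" and ss: "s * s = a * a + b * b"
  shows "((a * a + X * c + (b * b + Y * d)) * (1/s) + (X * a + Y * b) * (-(a * c+b * d) * (1/s) * (1/s) * (1/s))) / s
       = 1 + ((a * d - b * c) * (1/s) * (1/s) * (1/s)) * ((Y * a - X * b) * (1/s))"
proof -
  have "((a * a + X * c + (b * b + Y * d)) * (1/s) + (X * a + Y * b) * (-(a * c+b * d) * (1/s) * (1/s) * (1/s))) / s
      = ((a * a + X * c + (b * b + Y * d)) * (s * s) - (X * a + Y * b) * (a * c+b * d)) / (s * s * s * s)"
    using s by (simp add: field_simps)
  also have "\<dots> = ((a * a + X * c + (b * b + Y * d)) * (a * a + b * b) - (X * a + Y * b) * (a * c+b * d)) / (s * s * s * s)"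
    by (simp only: ss)
  also have "\<dots> = ((s * s) * (s * s) + (a * d - b * c) * (Y * a - X * b)) / (s * s * s * s)"
    by (simp only: ss) (simp add: algebra_simps)
  also have "\<dots> = 1 + ((a * d - b * c) * (1/s) * (1/s) * (1/s)) * ((Y * a - X * b) * (1/s))"
    using s by (simp add: field_simps)
  finally show ?thesis .
qed


context curve begin

lemmas Gi = Gs.gadd Gs.gmul G_sub G_neg Gs.gc Gs.gr Gx1 Gy1 Gx0 Gy0

lemma G_deriv: "f \<in> G \<Longrightarrow> deriv f \<in> G" using G_props by blast
lemma G_der: "f \<in> G \<Longrightarrow> (f has_real_derivative deriv f t) (at t)" using G_props by blast
lemma G_per: "f \<in> G \<Longrightarrow> f (t+1) = f t" using G_props by blast

lemma G_cont: "f \<in> G \<Longrightarrow> continuous_on S f"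
  by (meson DERIV_isCont G_der continuous_at_imp_continuous_on)

lemma sig_eq: "\<sigma> = (\<lambda>t. ((deriv x t) * (deriv x t) + (deriv y t) * (deriv y t)) * (1 / \<sigma> t))"
proof
  fix t
  have "(\<sigma> t)^2 = (deriv x t)^2 + (deriv y t)^2" unfolding speed_def using u_pos[of t] by simp
  then show "\<sigma> t = ((deriv x t) * (deriv x t) + (deriv y t) * (deriv y t)) * (1 / \<sigma> t)"
    using sig_pos[of t] by (simp add: power2_eq_square field_simps)
qed

lemma G_sig: "\<sigma> \<in> G"
  by (subst sig_eq) (intro Gi)

definition Dop :: "(real \<Rightarrow> real) \<Rightarrow> real \<Rightarrow> real" where
  "Dop f = (\<lambda>t. deriv f t / \<sigma> t)"

lemma G_D: "f \<in> G \<Longrightarrow> Dop f \<in> G"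
proof -
  assume "f \<in> G"
  then have "(\<lambda>t. deriv f t * (1 / \<sigma> t)) \<in> G" by (intro Gi G_deriv)
  then show ?thesis unfolding Dop_def by simp
qed

lemma G_Dn: "f \<in> G \<Longrightarrow> (Dop^^n) f \<in> G"
  by (induction n) (auto intro: G_D)

lemma curv_eq: "curv x y = (\<lambda>t. (deriv x t * (deriv^^2) y t - deriv y t * (deriv^^2) x t) * (1/\<sigma> t) * (1/\<sigma> t) * (1/\<sigma> t))"
  by (rule ext) (simp add: curv_def numeral_2_eq_2 power3_eq_cube)

lemma G_curv: "curv x y \<in> G"
  unfolding curv_eq by (intro Gi Gs.gx Gs.gy)

lemma curv_s_eq: "curv_s x y j = (Dop^^j) (curv x y)"
  by (induction j) (auto simp: Dop_def)

lemma G_ks: "curv_s x y j \<in> G"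
  unfolding curv_s_eq by (intro G_Dn G_curv)

lemma D_add: "f \<in> G \<Longrightarrow> g \<in> G \<Longrightarrow> Dop (\<lambda>t. f t + g t) = (\<lambda>t. Dop f t + Dop g t)"
  unfolding Dop_def
  by (rule ext, subst DERIV_imp_deriv[OF DERIV_add[OF G_der G_der]]) (auto simp: add_divide_distrib)

lemma D_mul: "f \<in> G \<Longrightarrow> g \<in> G \<Longrightarrow> Dop (\<lambda>t. f t * g t) = (\<lambda>t. Dop f t * g t + f t * Dop g t)"
  unfolding Dop_def
  by (rule ext, subst DERIV_imp_deriv[OF DERIV_mult[OF G_der G_der]]) (auto simp: add_divide_distrib)

lemma D_const: "Dop (\<lambda>t. c) = (\<lambda>t. 0)"
  unfolding Dop_def by simp

lemma D_cmul: "f \<in> G \<Longrightarrow> Dop (\<lambda>t. c * f t) = (\<lambda>t. c * Dop f t)"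
  using D_mul[OF Gs.gc, of f c] by (simp add: D_const)

lemma D_neg: "f \<in> G \<Longrightarrow> Dop (\<lambda>t. - f t) = (\<lambda>t. - Dop f t)"
  using D_cmul[of f "-1"] by simp

lemma D_sub: "f \<in> G \<Longrightarrow> g \<in> G \<Longrightarrow> Dop (\<lambda>t. f t - g t) = (\<lambda>t. Dop f t - Dop g t)"
  using D_add[OF _ G_neg, of f g] by (simp add: D_neg)

abbreviation I where "I \<equiv> int_ds x y"

lemma G_int: "f \<in> G \<Longrightarrow> (\<lambda>t. f t * \<sigma> t) integrable_on {0..1}"
  by (intro integrable_continuous_interval G_cont Gs.gmul G_sig)

lemma I_add: "f \<in> G \<Longrightarrow> g \<in> G \<Longrightarrow> I (\<lambda>t. f t + g t) = I f + I g"
  unfolding int_ds_def using integral_add[OF G_int G_int, of f g] by (simp add: distrib_right)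

lemma I_cmul: "I (\<lambda>t. c * f t) = c * I f"
  unfolding int_ds_def using integral_mult[of _ "{0..1}" c] integral_cmul[of "{0..1}" c "\<lambda>t. f t * \<sigma> t"]
  by (simp add: mult.assoc)

lemma I_neg: "I (\<lambda>t. - f t) = - I f"
  using I_cmul[of "-1" f] by simp

lemma I_sub: "f \<in> G \<Longrightarrow> g \<in> G \<Longrightarrow> I (\<lambda>t. f t - g t) = I f - I g"
  using I_add[OF _ G_neg, of f g] by (simp add: I_neg)

lemma I_sum: "finite S \<Longrightarrow> (\<And>i. i \<in> S \<Longrightarrow> F i \<in> G) \<Longrightarrow> I (\<lambda>t. \<Sum>i\<in>S. F i t) = (\<Sum>i\<in>S. I (F i))"
  unfolding int_ds_def using integral_sum[of S "\<lambda>i t. F i t * \<sigma> t" "{0..1}"] G_int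
  by (simp add: sum_distrib_right)

lemma I_D: "f \<in> G \<Longrightarrow> I (Dop f) = 0"
proof -
  assume f: "f \<in> G"
  have e: "(\<lambda>t. Dop f t * \<sigma> t) = deriv f" unfolding Dop_def using sig_pos
    by (intro ext) (simp add: less_imp_neq[symmetric])
  have "(deriv f has_integral (f 1 - f 0)) {0..1}"
    by (rule fundamental_theorem_of_calculus)
       (auto simp: has_real_derivative_iff_has_vector_derivative[symmetric] intro!: has_field_derivative_at_within G_der[OF f])
  moreover have "f 1 = f 0" using G_per[OF f, of 0] by simp
  ultimately show ?thesis unfolding int_ds_def e by (simp add: integral_unique)
qed

lemma I_parts: "f \<in> G \<Longrightarrow> g \<in> G \<Longrightarrow> I (\<lambda>t. Dop f t * g t) = - I (\<lambda>t. f t * Dop g t)"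
proof -
  assume f: "f \<in> G" and g: "g \<in> G"
  have "0 = I (Dop (\<lambda>t. f t * g t))" using I_D[OF Gs.gmul[OF f g]] by simp
  also have "\<dots> = I (\<lambda>t. Dop f t * g t) + I (\<lambda>t. f t * Dop g t)"
    unfolding D_mul[OF f g] by (rule I_add) (intro Gi G_D f g)+
  finally show ?thesis by simp
qed

lemma I_parts_n: "f \<in> G \<Longrightarrow> g \<in> G \<Longrightarrow>
   I (\<lambda>t. f t * (Dop^^n) g t) = (-1)^n * I (\<lambda>t. (Dop^^n) f t * g t)"
proof (induction n arbitrary: f)
  case 0 then show ?case by simp
next
  case (Suc n)
  have "I (\<lambda>t. f t * (Dop^^Suc n) g t) = I (\<lambda>t. f t * Dop ((Dop^^n) g) t)" by simp
  also have "\<dots> = - I (\<lambda>t. Dop f t * (Dop^^n) g t)"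
    using I_parts[OF Suc.prems(1) G_Dn[OF Suc.prems(2)]] by simp
  also have "\<dots> = - ((-1)^n * I (\<lambda>t. (Dop^^n) (Dop f) t * g t))"
    using Suc.IH[OF G_D[OF Suc.prems(1)] Suc.prems(2)] by simp
  also have "\<dots> = (-1)^(Suc n) * I (\<lambda>t. (Dop^^Suc n) f t * g t)"
    by (simp add: funpow_Suc_right del: funpow.simps)
  finally show ?case .
qed

end


context curve begin

definition pp :: "real \<Rightarrow> real" where
  "pp = (\<lambda>t. ((y t - y 0) * deriv x t - (x t - x 0) * deriv y t) * (1 / \<sigma> t))"
definition qq :: "real \<Rightarrow> real" where
  "qq = (\<lambda>t. ((x t - x 0) * deriv x t + (y t - y 0) * deriv y t) * (1 / \<sigma> t))"

abbreviation "k \<equiv> curv x y"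

lemma G_pp: "pp \<in> G" unfolding pp_def by (intro Gi)
lemma G_qq: "qq \<in> G" unfolding qq_def by (intro Gi)

lemma dx0: "(x has_real_derivative deriv x t) (at t)" using G_der[OF Gx0] .
lemma dy0: "(y has_real_derivative deriv y t) (at t)" using G_der[OF Gy0] .

lemma ss_eq: "\<sigma> t * \<sigma> t = deriv x t * deriv x t + deriv y t * deriv y t"
  unfolding speed_def using u_pos[of t] by (simp add: power2_eq_square[symmetric])

lemma k_val: "k t = (deriv x t * (deriv^^2) y t - deriv y t * (deriv^^2) x t) * (1/\<sigma> t) * (1/\<sigma> t) * (1/\<sigma> t)"
  by (subst curv_eq) simp

lemma D_pp: "Dop pp = (\<lambda>t. - k t * qq t)"
proof
  fix t
  have d: "(pp has_real_derivative
     ((deriv y t * deriv x t + (y t - y 0) * (deriv^^2) x t - (deriv x t * deriv y t + (x t - x 0) * (deriv^^2) y t)) * (1 / \<sigma> t)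
      + ((y t - y 0) * deriv x t - (x t - x 0) * deriv y t) *
        (- (deriv x t * (deriv^^2) x t + deriv y t * (deriv^^2) y t) * (1/\<sigma> t) * (1/\<sigma> t) * (1/\<sigma> t)))) (at t)"
    unfolding pp_def
    by (rule DERIV_mult[OF DERIV_diff[OF DERIV_mult[OF DERIV_diff[OF dy0 DERIV_const] dx1] DERIV_mult[OF DERIV_diff[OF dx0 DERIV_const] dy1]] r_deriv, THEN DERIV_cong])
       (simp add: algebra_simps)
  show "Dop pp t = - k t * qq t"
    unfolding Dop_def DERIV_imp_deriv[OF d] k_val qq_def
    by (rule alg_p[where c="(deriv^^2) x t" and d="(deriv^^2) y t" and X="x t - x 0" and Y="y t - y 0", OF sig_pos[of t] ss_eq[of t]])
qed

lemma D_qq: "Dop qq = (\<lambda>t. 1 + k t * pp t)"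
proof
  fix t
  have d: "(qq has_real_derivative
     ((deriv x t * deriv x t + (x t - x 0) * (deriv^^2) x t + (deriv y t * deriv y t + (y t - y 0) * (deriv^^2) y t)) * (1 / \<sigma> t)
      + ((x t - x 0) * deriv x t + (y t - y 0) * deriv y t) *
        (- (deriv x t * (deriv^^2) x t + deriv y t * (deriv^^2) y t) * (1/\<sigma> t) * (1/\<sigma> t) * (1/\<sigma> t)))) (at t)"
    unfolding qq_def
    by (rule DERIV_mult[OF DERIV_add[OF DERIV_mult[OF DERIV_diff[OF dx0 DERIV_const] dx1] DERIV_mult[OF DERIV_diff[OF dy0 DERIV_const] dy1]] r_deriv, THEN DERIV_cong])
       (simp add: algebra_simps)
  show "Dop qq t = 1 + k t * pp t"
    unfolding Dop_def DERIV_imp_deriv[OF d] k_val pp_def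
    by (rule alg_q[where c="(deriv^^2) x t" and d="(deriv^^2) y t" and X="x t - x 0" and Y="y t - y 0", OF sig_pos[of t] ss_eq[of t]])
qed

end


context curve begin

abbreviation "kj \<equiv> curv_s x y"

declare curv_s.simps(2)[simp del]

lemma ks_Suc: "kj (Suc j) = Dop (kj j)" by (simp add: Dop_def curv_s.simps(2))

lemma ks_add: "(Dop^^i) (kj j) = kj (i + j)"
  by (simp add: curv_s_eq funpow_add)

lemma D_k: "Dop k = kj 1" using ks_Suc[of 0] by simp

primrec Nf :: "nat \<Rightarrow> real \<Rightarrow> real" where
  "Nf 0 = (\<lambda>t. Dop (Dop pp) t + k t * k t * pp t)"
| "Nf (Suc j) = (\<lambda>t. Dop (Nf j) t + k t * pp t * kj (Suc j) t)"

lemmas Gall = Gi G_ks G_curv G_pp G_qq G_D G_cmul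

lemma G_N: "Nf j \<in> G"
  by (induction j) (simp_all, (intro Gall)+)

lemma N_eq: "Nf j = (\<lambda>t. - (real j + 1) * kj j t - qq t * kj (Suc j) t)"
proof (induction j)
  case 0
  have "Dop (Dop pp) = (\<lambda>t. - (kj 1 t) * qq t + (- k t) * (1 + k t * pp t))"
    unfolding D_pp D_mul[OF G_neg[OF G_curv] G_qq] D_neg[OF G_curv] D_k D_qq ..
  then show ?case by (auto simp: algebra_simps)
next
  case (Suc j)
  have "Dop (Nf j) = (\<lambda>t. - (real j + 1) * kj (Suc j) t - ((1 + k t * pp t) * kj (Suc j) t + qq t * kj (Suc (Suc j)) t))"
    unfolding Suc D_sub[OF G_cmul[OF G_ks] Gs.gmul[OF G_qq G_ks]] D_cmul[OF G_ks] D_mul[OF G_qq G_ks] D_qq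
      ks_Suc[symmetric] ..
  then show ?case by (auto simp: algebra_simps)
qed

lemma C_lemma: "f \<in> G \<Longrightarrow> I (\<lambda>t. f t * Nf j t) = (-1)^j * I (\<lambda>t. (Dop^^j) f t * Nf 0 t)
   + (\<Sum>i<j. (-1)^i * I (\<lambda>t. (Dop^^i) f t * (k t * pp t * kj (j - i) t)))"
proof (induction j arbitrary: f)
  case 0 then show ?case by simp
next
  case (Suc j)
  have f: "f \<in> G" by fact
  have "I (\<lambda>t. f t * Nf (Suc j) t) = I (\<lambda>t. f t * Dop (Nf j) t + f t * (k t * pp t * kj (Suc j) t))"
    by (simp add: algebra_simps)
  also have "\<dots> = I (\<lambda>t. f t * Dop (Nf j) t) + I (\<lambda>t. f t * (k t * pp t * kj (Suc j) t))"
    by (rule I_add) (intro Gall G_N f)+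
  also have "I (\<lambda>t. f t * Dop (Nf j) t) = - I (\<lambda>t. Dop f t * Nf j t)"
    using I_parts[OF f G_N[of j]] by simp
  also have "\<dots> = - ((-1)^j * I (\<lambda>t. (Dop^^j) (Dop f) t * Nf 0 t)
   + (\<Sum>i<j. (-1)^i * I (\<lambda>t. (Dop^^i) (Dop f) t * (k t * pp t * kj (j - i) t))))"
    using Suc.IH[OF G_D[OF f]] by simp
  finally show ?case
    by (simp add: sum.lessThan_Suc_shift funpow_Suc_right sum_negf del: funpow.simps sum.lessThan_Suc)
qed

end


context curve begin

lemma sum_id:
  fixes c :: "nat \<Rightarrow> real"
  assumes "m \<ge> 1"
  shows "(\<Sum>r = 1..m. (-1)^(r+1) * c r) = - ((\<Sum>i<m. (-1)^i * c i) - c 0) + (-1)^(m+1) * c m"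
proof -
  obtain n where m: "m = Suc n" using assms by (cases m) auto
  have "(\<Sum>r = 1..m. (-1)^(r+1) * c r) = (\<Sum>i<Suc n. (-1)^(Suc i+1) * c (Suc i))"
    unfolding m using sum.atLeast1_atMost_eq[of "\<lambda>r. (-1)^(r+1) * c r" "Suc n"] by simp
  also have "\<dots> = (\<Sum>i<n. (-1)^(Suc i+1) * c (Suc i)) + (-1)^(m+1) * c m"
    by (simp add: m)
  also have "(\<Sum>i<n. (-1)^(Suc i+1) * c (Suc i)) = - (\<Sum>i<n. (-1)^(Suc i) * c (Suc i))"
    by (simp add: sum_negf[symmetric])
  also have "(\<Sum>i<n. (-1)^(Suc i) * c (Suc i)) = (\<Sum>i<m. (-1)^i * c i) - c 0"
    unfolding m by (simp add: sum.lessThan_Suc_shift del: sum.lessThan_Suc)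
  finally show ?thesis .
qed

lemma G_sum: "finite S \<Longrightarrow> (\<And>r. F r \<in> G) \<Longrightarrow> (\<lambda>t. \<Sum>r\<in>S. F r t) \<in> G"
proof (induction S rule: finite_induct)
  case empty then show ?case by (simp add: Gs.gc)
next
  case (insert a S) then show ?case by (simp add: Gs.gadd)
qed

lemma main_id:
  assumes m1: "m \<ge> 1"
  shows "I (\<lambda>t. Kop m x y t * pp t) = (2 * real m + 1) * energy m x y"
proof -
  define c where "c = (\<lambda>i. I (\<lambda>t. k t * pp t * kj (m - i) t * kj (m + i) t))"
  define A0 where "A0 = I (\<lambda>t. kj m t * kj m t)"
  define Q where "Q = I (\<lambda>t. qq t * kj m t * kj (Suc m) t)"
  define NM where "NM = I (\<lambda>t. kj m t * Nf m t)"
  define P where "P = I (\<lambda>t. kj (2 * m + 2) t * pp t)"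
  define S where "S = (\<Sum>i<m. (-1)^i * c i)"
  define T where "T = (\<Sum>r = 1..m. (-1)^(r+1) * c r)"
  have en: "energy m x y = 1/2 * A0"
    unfolding energy_def A0_def by (simp add: power2_eq_square)
  have e1: "NM = - (real m + 1) * A0 - Q"
  proof -
    have "(\<lambda>t. kj m t * Nf m t) = (\<lambda>t. (- (real m + 1)) * (kj m t * kj m t) - qq t * kj m t * kj (Suc m) t)"
      by (rule ext) (simp add: N_eq algebra_simps)
    then have "NM = I (\<lambda>t. (- (real m + 1)) * (kj m t * kj m t)) - Q"
      unfolding NM_def Q_def by (simp add: I_sub Gall)
    then show ?thesis unfolding A0_def by (simp add: I_cmul)
  qed
  have e2: "A0 + (c 0 + 2 * Q) = 0"
  proof -
    have g: "(\<lambda>t. qq t * (kj m t * kj m t)) \<in> G" by (intro Gall)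
    have "Dop (\<lambda>t. qq t * (kj m t * kj m t)) =
      (\<lambda>t. kj m t * kj m t + (k t * pp t * kj m t * kj m t + 2 * (qq t * kj m t * kj (Suc m) t)))"
      unfolding D_mul[OF G_qq Gs.gmul[OF G_ks G_ks]] D_mul[OF G_ks G_ks] D_qq ks_Suc[symmetric]
      by (rule ext) (simp add: algebra_simps)
    then have "0 = I (\<lambda>t. kj m t * kj m t + (k t * pp t * kj m t * kj m t + 2 * (qq t * kj m t * kj (Suc m) t)))"
      using I_D[OF g] by simp
    also have "\<dots> = A0 + (c 0 + 2 * Q)"
      unfolding A0_def c_def Q_def
      by (simp add: I_add I_cmul Gall)
    finally show ?thesis by simp
  qed
  have e3a: "NM = (-1)^m * I (\<lambda>t. kj (m + m) t * Nf 0 t)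
      + (\<Sum>i<m. (-1)^i * I (\<lambda>t. kj (i + m) t * (k t * pp t * kj (m - i) t)))"
    unfolding NM_def using C_lemma[OF G_ks[of m], of m] by (simp add: ks_add)
  have e3b: "(\<Sum>i<m. (-1)^i * I (\<lambda>t. kj (i + m) t * (k t * pp t * kj (m - i) t))) = S"
    unfolding S_def c_def by (intro sum.cong refl arg_cong[where f="\<lambda>z. (-1)^_ * z"] arg_cong[where f=I] ext)
      (simp add: algebra_simps)
  have e4: "I (\<lambda>t. kj (m + m) t * Nf 0 t) = P + c m"
  proof -
    have "I (\<lambda>t. kj (m + m) t * Nf 0 t) = I (\<lambda>t. kj (m + m) t * (Dop^^2) pp t + kj (m+m) t * (k t * k t * pp t))"
      by (simp add: algebra_simps numeral_2_eq_2)
    also have "\<dots> = I (\<lambda>t. kj (m + m) t * (Dop^^2) pp t) + I (\<lambda>t. kj (m+m) t * (k t * k t * pp t))"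
      by (rule I_add) (intro Gall G_Dn)+
    also have "I (\<lambda>t. kj (m + m) t * (Dop^^2) pp t) = P"
      unfolding P_def using I_parts_n[OF G_ks G_pp, of "m+m" 2] by (simp add: ks_add mult_2)
    also have "I (\<lambda>t. kj (m+m) t * (k t * k t * pp t)) = c m"
      unfolding c_def by (intro arg_cong[where f=I] ext) (simp add: algebra_simps)
    finally show ?thesis .
  qed
  have e5: "I (\<lambda>t. Kop m x y t * pp t) = (-1)^(m+1) * P + (-1/2) * c 0 + T"
  proof -
    have fe: "(\<lambda>t. Kop m x y t * pp t) = (\<lambda>t. (-1)^(m+1) * (kj (2 * m + 2) t * pp t)
       + ((-1/2) * (k t * pp t * kj (m - 0) t * kj (m + 0) t)
       + (\<Sum>r\<in>{1..m}. (-1)^(r+1) * (k t * pp t * kj (m - r) t * kj (m + r) t))))"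
    proof
      fix t
      have "k t * (\<Sum>r = 1..m. (- 1) ^ (r + 1) * kj (m - r) t * kj (m + r) t) * pp t
          = (\<Sum>r\<in>{1..m}. (-1)^(r+1) * (k t * pp t * kj (m - r) t * kj (m + r) t))"
        by (simp add: sum_distrib_left sum_distrib_right mult_ac)
      then show "Kop m x y t * pp t = (-1)^(m+1) * (kj (2 * m + 2) t * pp t)
       + ((-1/2) * (k t * pp t * kj (m - 0) t * kj (m + 0) t)
       + (\<Sum>r\<in>{1..m}. (-1)^(r+1) * (k t * pp t * kj (m - r) t * kj (m + r) t)))"
        unfolding Kop_def by (simp add: algebra_simps power2_eq_square)
    qed
    define Af where "Af = (\<lambda>t. (-1::real)^(m+1) * (kj (2 * m + 2) t * pp t))"
    define Bf where "Bf = (\<lambda>t. (-1/2::real) * (k t * pp t * kj (m - 0) t * kj (m + 0) t))"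
    define F where "F = (\<lambda>r t. (-1::real)^(r+1) * (k t * pp t * kj (m - r) t * kj (m + r) t))"
    have GF: "F r \<in> G" for r unfolding F_def by (intro Gall)
    have GA: "Af \<in> G" unfolding Af_def by (intro Gall)
    have GB: "Bf \<in> G" unfolding Bf_def by (intro Gall)
    have GS: "(\<lambda>t. \<Sum>r\<in>{1..m}. F r t) \<in> G" by (rule G_sum[OF finite_atLeastAtMost GF])
    have fe2: "(\<lambda>t. Kop m x y t * pp t) = (\<lambda>t. Af t + (Bf t + (\<Sum>r\<in>{1..m}. F r t)))"
      unfolding fe Af_def Bf_def F_def ..
    have "I (\<lambda>t. Kop m x y t * pp t) = I Af + (I Bf + (\<Sum>r\<in>{1..m}. I (F r)))"
      unfolding fe2 I_add[OF GA Gs.gadd[OF GB GS]] I_add[OF GB GS] I_sum[OF finite_atLeastAtMost GF] ..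
    also have "\<dots> = (-1)^(m+1) * P + (-1/2) * c 0 + T"
      unfolding Af_def Bf_def F_def T_def P_def c_def I_cmul by simp
    finally show ?thesis .
  qed
  have e7: "T = - (S - c 0) + (-1)^(m+1) * c m"
    unfolding T_def S_def by (rule sum_id[OF m1])
  have "I (\<lambda>t. Kop m x y t * pp t) = (real m + 1/2) * A0"
    using e1 e2 e3a e3b e4 e5 e7 by (simp add: algebra_simps)
  then show ?thesis unfolding en by (simp add: algebra_simps)
qed

end


lemma cs_lin: fixes a1 b1 u1 v1 :: real assumes "a1 * a1 + b1 * b1 = 1" shows "a1 * u1 + b1 * v1 \<le> sqrt (u1 * u1 + v1 * v1)"
proof (cases "a1 * u1 + b1 * v1 \<le> 0")
  case True
  have "0 \<le> sqrt (u1 * u1 + v1 * v1)" by simp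
  with True show ?thesis by linarith
next
  case False
  have "(a1 * u1 + b1 * v1)^2 + (a1 * v1 - b1 * u1)^2 = (a1 * a1 + b1 * b1) * (u1 * u1 + v1 * v1)" by (simp add: algebra_simps power2_eq_square)
  then have eq2: "(a1 * u1 + b1 * v1)^2 + (a1 * v1 - b1 * u1)^2 = u1 * u1 + v1 * v1" using assms by simp
  have "0 \<le> (a1 * v1 - b1 * u1)^2" by simp
  then have "(a1 * u1 + b1 * v1)^2 \<le> u1 * u1 + v1 * v1" using eq2 by linarith
  then show ?thesis by (rule real_le_rsqrt)
qed

context curve begin

abbreviation "L \<equiv> curve_length x y"

lemma L_eq: "L = integral {0..1} \<sigma>"
  unfolding curve_length_def int_ds_def by simp

lemma sig_int: "\<sigma> integrable_on {a..b}"
  by (intro integrable_continuous_interval G_cont G_sig)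

lemma bound_lin:
  assumes ab: "a0 * a0 + b0 * b0 = 1" and t: "t \<in> {0..1}"
  shows "a0 * (x t - x 0) + b0 * (y t - y 0) \<le> L"
proof -
  let ?g = "\<lambda>s. a0 * x s + b0 * y s"
  have d: "(?g has_real_derivative a0 * deriv x s + b0 * deriv y s) (at s)" for s
    by (auto intro!: derivative_eq_intros dx0 dy0)
  have "((\<lambda>s. a0 * deriv x s + b0 * deriv y s) has_integral (?g t - ?g 0)) {0..t}"
    using t by (intro fundamental_theorem_of_calculus)
      (auto simp: has_real_derivative_iff_has_vector_derivative[symmetric] intro!: has_field_derivative_at_within d)
  moreover have "(\<sigma> has_integral integral {0..t} \<sigma>) {0..t}" using sig_int by (simp add: integrable_integral)
  moreover have "a0 * deriv x s + b0 * deriv y s \<le> \<sigma> s" for s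
    unfolding speed_def using cs_lin[OF ab, of "deriv x s" "deriv y s"] by (simp add: power2_eq_square)
  ultimately have "?g t - ?g 0 \<le> integral {0..t} \<sigma>" by (rule has_integral_le)
  also have "\<dots> \<le> integral {0..1} \<sigma>"
    using t by (intro integral_subset_le sig_int) (auto intro: less_imp_le[OF sig_pos])
  finally show ?thesis unfolding L_eq by (simp add: algebra_simps)
qed

lemma pp_bound: assumes t: "t \<in> {0..1}" shows "\<bar>pp t\<bar> \<le> L"
proof -
  define a0 where "a0 = - deriv y t / \<sigma> t"
  define b0 where "b0 = deriv x t / \<sigma> t"
  have "a0 * a0 + b0 * b0 = (deriv x t * deriv x t + deriv y t * deriv y t) / (\<sigma> t * \<sigma> t)"
    unfolding a0_def b0_def by (simp add: add_divide_distrib)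
  also have "\<dots> = 1" using sig_pos[of t] by (simp add: ss_eq[symmetric])
  finally have ab: "a0 * a0 + b0 * b0 = 1" .
  have "pp t = a0 * (x t - x 0) + b0 * (y t - y 0)" unfolding pp_def a0_def b0_def using sig_pos[of t] by (simp add: field_simps)
  moreover have "(-a0) * (-a0) + (-b0) * (-b0) = 1" using ab by simp
  ultimately show ?thesis using bound_lin[OF ab t] bound_lin[of "-a0" "-b0", OF _ t] by (simp add: abs_le_iff)
qed

lemma L_nonneg: "L \<ge> 0"
  unfolding L_eq by (intro integral_nonneg sig_int) (auto intro: less_imp_le[OF sig_pos])

lemma G_pow2: "f \<in> G \<Longrightarrow> (\<lambda>t. (f t)^2) \<in> G"
  using Gs.gmul[of f x y f] by (simp add: power2_eq_square)

lemma GK: "Kop m x y \<in> G"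
proof -
  have "Kop m x y = (\<lambda>t. (-1) ^ (m + 1) * curv_s x y (2 * m + 2) t
     - 1/2 * curv x y t * (curv_s x y m t)\<^sup>2
     + curv x y t * (\<Sum>r = 1..m. (-1) ^ (r + 1) * curv_s x y (m - r) t * curv_s x y (m + r) t))"
    by (rule ext) (rule Kop_def)
  also have "\<dots> \<in> G" by (intro Gall G_pow2 G_sum finite_atLeastAtMost)
  finally show ?thesis .
qed

lemma I_mono: "f \<in> G \<Longrightarrow> g \<in> G \<Longrightarrow> (\<And>t. t \<in> {0..1} \<Longrightarrow> f t \<le> g t) \<Longrightarrow> I f \<le> I g"
  unfolding int_ds_def
  by (intro integral_le G_int) (auto intro: mult_right_mono less_imp_le[OF sig_pos])

end


context curve begin

lemma key_bound:
  assumes m1: "m \<ge> 1"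
  shows "I (\<lambda>t. Kop m x y t * pp t) \<le> L powr (3/2) * sqrt (I (\<lambda>t. (Kop m x y t)^2))"
proof -
  define K where "K = Kop m x y"
  define A where "A = I (\<lambda>t. (K t)^2)"
  define a where "a = sqrt A"
  define M where "M = L powr (3/2)"
  define J where "J = I (\<lambda>t. K t * pp t)"
  have GK': "K \<in> G" unfolding K_def by (rule GK)
  have A0: "A \<ge> 0"
  proof -
    have "I (\<lambda>t. 0 * 1) \<le> A" unfolding A_def by (intro I_mono G_pow2 GK' Gs.gmul Gs.gc) auto
    moreover have "I (\<lambda>t. 0 * 1) = 0" unfolding int_ds_def by simp
    ultimately show ?thesis by linarith
  qed
  have a0: "a \<ge> 0" unfolding a_def using A0 by simp
  have aA: "a * a = A" unfolding a_def using A0 by simp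
  have M0: "M \<ge> 0" unfolding M_def by simp
  show ?thesis
  proof (cases "L = 0")
    case True
    have pz: "pp t = 0" if "t \<in> {0..1}" for t using pp_bound[OF that] True by simp
    have GJ: "(\<lambda>t. K t * pp t) \<in> G" by (intro Gs.gmul GK' G_pp)
    have G0: "(\<lambda>t. 0 * 1) \<in> G" by (intro Gs.gmul Gs.gc)
    have z: "I (\<lambda>t. 0 * 1) = 0" unfolding int_ds_def by simp
    have "J \<le> I (\<lambda>t. 0 * 1)" unfolding J_def by (rule I_mono[OF GJ G0]) (simp add: pz)
    moreover have "I (\<lambda>t. 0 * 1) \<le> J" unfolding J_def by (rule I_mono[OF G0 GJ]) (simp add: pz)
    ultimately have "J = 0" using z by linarith
    then show ?thesis unfolding J_def[symmetric] K_def[symmetric] A_def[symmetric] using M0 a0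
      unfolding M_def a_def by simp
  next
    case False
    then have Lp: "L > 0" using L_nonneg by simp
    have Mp: "M > 0" unfolding M_def using Lp by simp
    have MM: "M * M = L * L * L"
    proof -
      have "M * M = L powr (3/2 + 3/2)" unfolding M_def by (simp only: powr_add)
      also have "\<dots> = L powr (real 3)" by simp
      also have "\<dots> = L ^ 3" by (rule powr_realpow[OF Lp])
      finally show ?thesis by (simp add: power3_eq_cube)
    qed
    have Ipp: "I (\<lambda>t. (pp t)^2) \<le> L * L * L"
    proof -
      have "I (\<lambda>t. (pp t)^2) \<le> I (\<lambda>t. (L * L) * 1)"
      proof (rule I_mono)
        show "(\<lambda>t. (pp t)^2) \<in> G" by (intro G_pow2 G_pp)
        show "(\<lambda>t. (L * L) * 1) \<in> G" by (intro Gs.gmul Gs.gc)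
        fix t :: real assume t: "t \<in> {0..1}"
        have "\<bar>pp t\<bar> * \<bar>pp t\<bar> \<le> L * L" using pp_bound[OF t] by (intro mult_mono) auto
        then show "(pp t)^2 \<le> L * L * 1" by (simp add: power2_eq_square abs_mult[symmetric])
      qed
      moreover have "I (\<lambda>t. (L * L) * 1) = L * L * L"
        using I_cmul[of "L * L" "\<lambda>t. 1"] by (simp add: curve_length_def)
      ultimately show ?thesis by simp
    qed
    have "J \<le> M * a + e" if e: "e > 0" for e
    proof -
      define a' where "a' = a + e / M"
      have a'p: "a' > 0" unfolding a'_def using a0 e Mp by (simp add: add_nonneg_pos)
      have aa': "a \<le> a'" unfolding a'_def using e Mp by simp
      have "I (\<lambda>t. (2 * M * a') * (K t * pp t)) \<le> I (\<lambda>t. (M * M) * (K t)^2 + (a' * a') * (pp t)^2)"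
      proof (rule I_mono)
        show "(\<lambda>t. (2 * M * a') * (K t * pp t)) \<in> G" by (intro Gall GK')
        show "(\<lambda>t. (M * M) * (K t)^2 + (a' * a') * (pp t)^2) \<in> G" by (intro Gall GK' G_pow2)
        fix t
        have "0 \<le> (M * K t - a' * pp t)^2" by simp
        then show "(2 * M * a') * (K t * pp t) \<le> (M * M) * (K t)^2 + (a' * a') * (pp t)^2"
          by (simp add: power2_eq_square algebra_simps)
      qed
      moreover have "I (\<lambda>t. (2 * M * a') * (K t * pp t)) = (2 * M * a') * J"
        unfolding J_def by (rule I_cmul)
      moreover have "I (\<lambda>t. (M * M) * (K t)^2 + (a' * a') * (pp t)^2) = (M * M) * A + (a' * a') * I (\<lambda>t. (pp t)^2)"
        unfolding A_def by (simp only: I_add[OF G_cmul[OF G_pow2[OF GK']] G_cmul[OF G_pow2[OF G_pp]]] I_cmul)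
      ultimately have "(2 * M * a') * J \<le> (M * M) * A + (a' * a') * I (\<lambda>t. (pp t)^2)" by simp
      also have "\<dots> \<le> (M * M) * (a' * a') + (a' * a') * (M * M)"
      proof (rule add_mono)
        show "M * M * A \<le> M * M * (a' * a')" using aA aa' a0 by (intro mult_left_mono) (auto intro: mult_mono)
        show "a' * a' * I (\<lambda>t. (pp t)\<^sup>2) \<le> a' * a' * (M * M)" using Ipp MM by (intro mult_left_mono) auto
      qed
      also have "\<dots> = (2 * M * a') * (M * a')" by (simp add: algebra_simps)
      finally have "(2 * M * a') * J \<le> (2 * M * a') * (M * a')" .
      then have "J \<le> M * a'" by (rule mult_left_le_imp_le) (use Mp a'p in simp)
      moreover have "M * a' = M * a + e" unfolding a'_def using Mp by (simp add: distrib_left)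
      ultimately show ?thesis by simp
    qed
    then have "J \<le> M * a" by (rule field_le_epsilon)
    then show ?thesis unfolding J_def M_def a_def A_def K_def .
  qed
qed

lemma final:
  assumes m1: "m \<ge> 1"
  shows "energy m x y \<le> 1 / (2 * real m + 1) * curve_length x y powr (3/2) * L2_ds x y (Kop m x y)"
proof -
  have "(2 * real m + 1) * energy m x y \<le> L powr (3/2) * L2_ds x y (Kop m x y)"
    using key_bound[OF m1] main_id[OF m1] unfolding L2_ds_def by simp
  moreover have pos: "2 * real m + 1 > 0" by simp
  ultimately have "energy m x y \<le> (L powr (3/2) * L2_ds x y (Kop m x y)) / (2 * real m + 1)"
    by (simp add: pos_le_divide_eq mult.commute)
  then show ?thesis by simp
qed

end

theorem mainTheorem6:
  fixes m :: nat and x y :: "real \<Rightarrow> real"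
  assumes "m \<ge> 1"
    and "smooth_closed_immersed x y"
  shows "energy m x y \<le> 1 / (2 * real m + 1) * curve_length x y powr (3/2) * L2_ds x y (Kop m x y)"
proof -
  interpret curve x y by (rule curve.intro) (rule assms(2))
  show ?thesis by (rule final[OF assms(1)])
qed

end
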